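(* Let $ABC$ be a triangle with incenter $I$, and let $H_A, H_B, H_C$ be the orthocenters of the triangles $BIC$, $CIA$, $AIB$ respectively. Let $O_A, O_B, O_C$ be the circumcenters of the triangles $AH_BH_C$, $BH_CH_A$, $CH_AH_B$ respectively. Then the reflections of the Euler line of triangle $O_AO_BO_C$ in its sidelines $O_BO_C$, $O_CO_A$, $O_AO_B$ are the lines $H_AI$, $H_BI$, $H_CI$ respectively.
   Context: The Euler line of a triangle is the line through its circumcenter, centroid and orthocenter. *)

theory Defs
  imports "HOL-Analysis.Analysis"
begin

definition incenter :: "complex \<Rightarrow> complex \<Rightarrow> complex \<Rightarrow> complex" where
  "incenter A B C =
     (let a = dist B C; b = dist C A; c = dist A B
      in (of_real a * A + of_real b * B + of_real c * C) / of_real (a + b + c))"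

definition orthocenter :: "complex \<Rightarrow> complex \<Rightarrow> complex \<Rightarrow> complex" where
  "orthocenter A B C =
     (THE H. inner (H - A) (B - C) = 0 \<and> inner (H - B) (C - A) = 0 \<and> inner (H - C) (A - B) = 0)"

definition circumcenter :: "complex \<Rightarrow> complex \<Rightarrow> complex \<Rightarrow> complex" where
  "circumcenter A B C = (THE X. dist X A = dist X B \<and> dist X B = dist X C)"

definition centroid :: "complex \<Rightarrow> complex \<Rightarrow> complex \<Rightarrow> complex" where
  "centroid A B C = (A + B + C) / 3"

definition line :: "complex \<Rightarrow> complex \<Rightarrow> complex set" where
  "line P Q = affine hull {P, Q}"

definition euler_line :: "complex \<Rightarrow> complex \<Rightarrow> complex \<Rightarrow> complex set" where
  "euler_line A B C = affine hull {circumcenter A B C, centroid A B C, orthocenter A B C}"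

definition reflect :: "complex \<Rightarrow> complex \<Rightarrow> complex \<Rightarrow> complex" where
  "reflect P Q z = P + ((Q - P) / cnj (Q - P)) * cnj (z - P)"

end

theory Submission
  imports Defs
begin


lemma cross_nz_of_noncol:
  fixes A B C :: complex
  assumes "\<not> collinear {A, B, C}"
  shows "Im (cnj (B - A) * (C - A)) \<noteq> 0"
proof
  assume h: "Im (cnj (B - A) * (C - A)) = 0"
  show False
  proof (cases "B = A")
    case True
    then have "{A,B,C} = {A,C}" by auto
    then show False using assms collinear_2 by metis
  next
    case False
    define k where "k = Re ((C - A) / (B - A))"
    have "Im ((C - A) / (B - A)) = 0"
      using h by (simp add: Im_divide algebra_simps)
    then have "(C - A) / (B - A) = of_real k" unfolding k_def by (simp add: complex_eq_iff)
    then have ck: "C = A + k *\<^sub>R (B - A)" using False by (simp add: field_simps scaleR_conv_of_real)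
    have "A = A + 0 *\<^sub>R (B-A)" "B = A + 1 *\<^sub>R (B - A)" by simp_all
    then have "\<forall>x\<in>{A,B,C}. \<exists>c. x = A + c *\<^sub>R (B-A)" using ck by blast
    then have "collinear {A,B,C}" unfolding collinear_alt by blast
    then show False using assms by contradiction
  qed
qed

lemma inner_zero_iff: "inner x y = 0 \<longleftrightarrow> x * cnj y + cnj x * y = 0"
proof -
  have "x * cnj y + cnj x * y = of_real (2 * inner x y)"
    by (simp add: inner_complex_def complex_eq_iff algebra_simps)
  then show ?thesis by simp
qed

lemma dist_eq_iff: "dist X A = dist X B \<longleftrightarrow> (X - A) * cnj (X - A) = (X - B) * cnj (X - B)"
proof -
  have "dist X A = dist X B \<longleftrightarrow> (cmod (X - A))^2 = (cmod (X - B))^2"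
    by (simp add: dist_norm power2_eq_iff_nonneg)
  also have "\<dots> \<longleftrightarrow> complex_of_real ((cmod (X - A))^2) = complex_of_real ((cmod (X - B))^2)"
    by (simp only: of_real_eq_iff)
  also have "\<dots> \<longleftrightarrow> (X - A) * cnj (X - A) = (X - B) * cnj (X - B)"
    by (simp only: complex_norm_square)
  finally show ?thesis .
qed

lemma lin2_zero:
  fixes w u v :: complex
  assumes "inner w u = 0" "inner w v = 0" "Im (cnj u * v) \<noteq> 0"
  shows "w = 0"
proof -
  have h1: "Re w * Re u + Im w * Im u = 0" and h2: "Re w * Re v + Im w * Im v = 0"
    using assms(1,2) unfolding inner_complex_def by auto
  have c: "Im (cnj u * v) = Re u * Im v - Im u * Re v" by simp
  have "Re w * (Re u * Im v - Im u * Re v) = 0" "Im w * (Re u * Im v - Im u * Re v) = 0"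
    using h1 h2 by algebra+
  then show ?thesis using assms(3) c by (simp add: complex_eq_iff)
qed

lemma cross_shift: "Im (cnj (B - C) * (C - A)) = Im (cnj (B - A) * (C - A))"
  by (simp add: algebra_simps)

lemma orth_unique:
  fixes A B C H :: complex
  assumes nc: "Im (cnj (B - A) * (C - A)) \<noteq> 0"
    and h1: "inner (H - A) (B - C) = 0" and h2: "inner (H - B) (C - A) = 0"
    and h3: "inner (H - C) (A - B) = 0"
  shows "orthocenter A B C = H"
  unfolding orthocenter_def
proof (rule the_equality)
  show "inner (H - A) (B - C) = 0 \<and> inner (H - B) (C - A) = 0 \<and> inner (H - C) (A - B) = 0"
    using h1 h2 h3 by blast
next
  fix H' assume "inner (H' - A) (B - C) = 0 \<and> inner (H' - B) (C - A) = 0 \<and> inner (H' - C) (A - B) = 0"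
  then have g1: "inner (H' - A) (B - C) = 0" and g2: "inner (H' - B) (C - A) = 0" by auto
  have "inner (H' - H) (B - C) = inner (H' - A) (B - C) - inner (H - A) (B - C)"
    by (simp add: inner_diff_left)
  then have k1: "inner (H' - H) (B - C) = 0" using g1 h1 by simp
  have "inner (H' - H) (C - A) = inner (H' - B) (C - A) - inner (H - B) (C - A)"
    by (simp add: inner_diff_left)
  then have k2: "inner (H' - H) (C - A) = 0" using g2 h2 by simp
  have "H' - H = 0" using lin2_zero[OF k1 k2] nc cross_shift by metis
  then show "H' = H" by simp
qed

lemma dist_eq_comp: "dist X A = dist X B \<longleftrightarrow>
   (Re X - Re A)^2 + (Im X - Im A)^2 = (Re X - Re B)^2 + (Im X - Im B)^2"
  by (simp add: dist_norm cmod_def)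

lemma circ_unique:
  fixes A B C X :: complex
  assumes nc: "Im (cnj (B - A) * (C - A)) \<noteq> 0"
    and h1: "dist X A = dist X B" and h2: "dist X B = dist X C"
  shows "circumcenter A B C = X"
  unfolding circumcenter_def
proof (rule the_equality)
  show "dist X A = dist X B \<and> dist X B = dist X C" using h1 h2 by blast
next
  fix Y assume "dist Y A = dist Y B \<and> dist Y B = dist Y C"
  then have g1: "dist Y A = dist Y B" and g2: "dist Y B = dist Y C" by auto
  note e = h1[unfolded dist_eq_comp] h2[unfolded dist_eq_comp]
     g1[unfolded dist_eq_comp] g2[unfolded dist_eq_comp]
  have "2 * inner (Y - X) (B - A) = 0"
    using e unfolding inner_complex_def by simp algebra
  then have k1: "inner (Y - X) (A - B) = 0"
    by (metis inner_minus_right minus_diff_eq mult_eq_0_iff neg_equal_0_iff_equal zero_neq_numeral)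
  have "2 * inner (Y - X) (C - B) = 0"
    using e unfolding inner_complex_def by simp algebra
  then have k2: "inner (Y - X) (C - B) = 0" by simp
  have "Im (cnj (A - B) * (C - B)) = - Im (cnj (B - A) * (C - A))" by (simp add: algebra_simps)
  then have "Im (cnj (A - B) * (C - B)) \<noteq> 0" using nc by simp
  then have "Y - X = 0" using lin2_zero[OF k1 k2] by metis
  then show "Y = X" by simp
qed

lemma scale_diff: "(I + of_real r * x) - (I + of_real r * y) = of_real r * (x - y)"
  for I x y :: complex by (simp add: algebra_simps)

lemma cross_scaled:
  "Im (cnj ((I + of_real r * b) - (I + of_real r * a)) * ((I + of_real r * c) - (I + of_real r * a)))
   = r^2 * Im (cnj (b - a) * (c - a))"
  unfolding scale_diff by (simp add: power2_eq_square algebra_simps)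

lemma inner_scaled:
  "inner ((I + of_real r * x) - (I + of_real r * y)) ((I + of_real r * z) - (I + of_real r * w)) = 0
   \<longleftrightarrow> r = 0 \<or> (x - y) * cnj (z - w) + cnj (x - y) * (z - w) = 0"
proof -
  have "(of_real r * (x - y)) * cnj (of_real r * (z - w)) + cnj (of_real r * (x - y)) * (of_real r * (z - w))
    = of_real (r^2) * ((x - y) * cnj (z - w) + cnj (x - y) * (z - w))"
    by (simp add: algebra_simps power2_eq_square)
  then show ?thesis unfolding inner_zero_iff scale_diff by simp
qed

lemma orth_scaled:
  fixes a b c h I :: complex and r :: real
  assumes r: "r \<noteq> 0" and nc: "Im (cnj (b - a) * (c - a)) \<noteq> 0"
    and "(h - a) * cnj (b - c) + cnj (h - a) * (b - c) = 0"
    and "(h - b) * cnj (c - a) + cnj (h - b) * (c - a) = 0"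
    and "(h - c) * cnj (a - b) + cnj (h - c) * (a - b) = 0"
  shows "orthocenter (I + of_real r * a) (I + of_real r * b) (I + of_real r * c) = I + of_real r * h"
  apply (rule orth_unique)
  subgoal unfolding cross_scaled using r nc by simp
  subgoal unfolding inner_scaled using assms(3) by simp
  subgoal unfolding inner_scaled using assms(4) by simp
  subgoal unfolding inner_scaled using assms(5) by simp
  done

lemma dist_scaled:
  "dist (I + of_real r * x) (I + of_real r * y) = dist (I + of_real r * x) (I + of_real r * z)
   \<longleftrightarrow> r = 0 \<or> (x - y) * cnj (x - y) = (x - z) * cnj (x - z)"
proof -
  have "\<And>u. (of_real r * u) * cnj (of_real r * u) = of_real (r^2) * (u * cnj u)"
    by (simp add: algebra_simps power2_eq_square)
  then show ?thesis unfolding dist_eq_iff scale_diff by simp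
qed

lemma circ_scaled:
  fixes a b c x I :: complex and r :: real
  assumes r: "r \<noteq> 0" and nc: "Im (cnj (b - a) * (c - a)) \<noteq> 0"
    and "(x - a) * cnj (x - a) = (x - b) * cnj (x - b)"
    and "(x - b) * cnj (x - b) = (x - c) * cnj (x - c)"
  shows "circumcenter (I + of_real r * a) (I + of_real r * b) (I + of_real r * c) = I + of_real r * x"
  apply (rule circ_unique)
  subgoal unfolding cross_scaled using r nc by simp
  subgoal unfolding dist_scaled using assms(3) by simp
  subgoal unfolding dist_scaled using assms(4) by simp
  done

lemma centroid_scaled:
  "centroid (I + of_real r * a) (I + of_real r * b) (I + of_real r * c) = I + of_real r * ((a + b + c)/3)"
  unfolding centroid_def by (simp add: field_simps)

lemma reflect_scaled:
  fixes r :: real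
  assumes "r \<noteq> 0"
  shows "reflect (I + of_real r * p) (I + of_real r * q) (I + of_real r * z) = I + of_real r * reflect p q z"
proof (cases "q = p")
  case True then show ?thesis by (simp add: reflect_def)
next
  case False
  then have "cnj q - cnj p \<noteq> 0" by simp
  then show ?thesis unfolding reflect_def scale_diff using assms by (simp add: field_simps)
qed



locale tri =
  fixes d e f :: complex
  assumes nz: "d \<noteq> 0" "e \<noteq> 0" "f \<noteq> 0"
    and cd: "cnj d = 1/d" and ce: "cnj e = 1/e" and cf: "cnj f = 1/f"
    and sde: "d+e \<noteq> 0" and sef: "e+f \<noteq> 0" and sfd: "f+d \<noteq> 0"
    and dde: "d \<noteq> e" and nef: "e \<noteq> f" and dfd: "f \<noteq> d"
begin
lemma s2: "e + d \<noteq> 0" "f+e \<noteq> 0" "d + f \<noteq> 0" using sde sef sfd by (simp_all add: add.commute)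
lemma dd2: "d - e \<noteq> 0" "e - f \<noteq> 0" "f - d \<noteq> 0" "e - d \<noteq> 0" "f - e \<noteq> 0" "d - f \<noteq> 0"
  using dde nef dfd by auto
lemmas ne = nz sde sef sfd s2 dd2
lemma invs: "1/d + 1/e = (d+e)/(d*e)" "1/e + 1/f = (e+f)/(e*f)" "1/f + 1/d = (f+d)/(f*d)"
  "1/e + 1/d = (e+d)/(e*d)" "1/f + 1/e = (f+e)/(f*e)" "1/d + 1/f = (d+f)/(d*f)"
  by (simp_all add: field_simps nz)

definition "a0 = e*f/(e+f)"
definition "b0 = f*d/(f+d)"
definition "c0 = d*e/(d+e)"
definition "ha = d^2*(e+f)/((d+e)*(d+f))"
definition "hb = e^2*(f+d)/((e+f)*(e+d))"
definition "hc = f^2*(d+e)/((f+d)*(f+e))"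
definition "PP = (d+e)*(e+f)*(f+d)"
definition "oa = e*f*(e*f - d^2)/PP"
definition "ob = f*d*(f*d - e^2)/PP"
definition "oc = d*e*(d*e - f^2)/PP"
definition "S1 = d+e+f"
definition "S2 = d*e+e*f+f*d"
definition "S3 = d*e*f"
definition "oz = -(S1*S3)/PP"
definition "gz = (S2^2 - 3*S1*S3)/(3*PP)"
definition "hz = (S2^2 - S1*S3)/PP"
definition "t1 = (e^2+e*f+f^2)/(e+f)^2"
definition "t2 = (2*f^2*d - f*e^2 - d^2*e + 2*d*e^2 - e*f^2 - f*d^2)/(3*d*(e+f)^2)"
definition "ro = t1 * ha"
definition "rg = t2 * ha"

lemma PP_nz: "PP \<noteq> 0" unfolding PP_def using ne by simp
lemmas defs = a0_def b0_def c0_def ha_def hb_def hc_def PP_def oa_def ob_def oc_def S1_def S2_def S3_def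
  oz_def gz_def hz_def ro_def rg_def t1_def t2_def


lemma cnj_a0: "cnj a0 = 1/(e+f)" unfolding a0_def by (simp add: cd ce cf invs, (simp add: divide_simps ne power2_eq_square)?, algebra?)
lemma cnj_b0: "cnj b0 = 1/(f+d)" unfolding b0_def by (simp add: cd ce cf invs, (simp add: divide_simps ne power2_eq_square)?, algebra?)
lemma cnj_c0: "cnj c0 = 1/(d+e)" unfolding c0_def by (simp add: cd ce cf invs, (simp add: divide_simps ne power2_eq_square)?, algebra?)
lemma cnj_ha: "cnj ha = (e+f)/((d+e)*(d+f))" unfolding ha_def by (simp add: cd ce cf invs, (simp add: divide_simps ne power2_eq_square)?, algebra?)
lemma cnj_hb: "cnj hb = (f+d)/((e+f)*(e+d))" unfolding hb_def by (simp add: cd ce cf invs, (simp add: divide_simps ne power2_eq_square)?, algebra?)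
lemma cnj_hc: "cnj hc = (d+e)/((f+d)*(f+e))" unfolding hc_def by (simp add: cd ce cf invs, (simp add: divide_simps ne power2_eq_square)?, algebra?)
lemma cnj_oa: "cnj oa = (d^2 - e*f)/PP" unfolding oa_def PP_def by (simp add: cd ce cf invs, (simp add: divide_simps ne power2_eq_square)?, algebra?)
lemma cnj_ob: "cnj ob = (e^2 - f*d)/PP" unfolding ob_def PP_def by (simp add: cd ce cf invs, (simp add: divide_simps ne power2_eq_square)?, algebra?)
lemma cnj_oc: "cnj oc = (f^2 - d*e)/PP" unfolding oc_def PP_def by (simp add: cd ce cf invs, (simp add: divide_simps ne power2_eq_square)?, algebra?)
lemma cnj_oz: "cnj oz = -S2/PP" unfolding oz_def PP_def S1_def S2_def S3_def by (simp add: cd ce cf invs, (simp add: divide_simps ne power2_eq_square)?, algebra?)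
lemma cnj_gz: "cnj gz = (S1^2 - 3*S2)/(3*PP)" unfolding gz_def PP_def S1_def S2_def S3_def by (simp add: cd ce cf invs, (simp add: divide_simps ne power2_eq_square)?, algebra?)
lemma cnj_hz: "cnj hz = (S1^2 - S2)/PP" unfolding hz_def PP_def S1_def S2_def S3_def by (simp add: cd ce cf invs, (simp add: divide_simps ne power2_eq_square)?, algebra?)
lemma cnj_t1: "cnj t1 = t1" unfolding t1_def by (simp add: cd ce cf invs, (simp add: divide_simps ne power2_eq_square)?, algebra?)
lemma cnj_t2: "cnj t2 = t2" unfolding t2_def by (simp add: cd ce cf invs, (simp add: divide_simps ne power2_eq_square)?, algebra?)
lemmas cnjs = cnj_a0 cnj_b0 cnj_c0 cnj_ha cnj_hb cnj_hc cnj_oa cnj_ob cnj_oc cnj_oz cnj_gz cnj_hz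

lemma Im_nz: "z - cnj z \<noteq> 0 \<Longrightarrow> Im z \<noteq> 0"
  by (metis complex_diff_cnj mult_zero_left of_real_0 mult_zero_right)

lemma ha_cond:
  "(ha - b0)*cnj(0 - c0) + cnj(ha - b0)*(0 - c0) = 0"
  "(ha - 0)*cnj(c0 - b0) + cnj(ha - 0)*(c0 - b0) = 0"
  "(ha - c0)*cnj(b0 - 0) + cnj(ha - c0)*(b0 - 0) = 0"
  apply (simp_all add: cnjs)
  apply (simp_all add: defs divide_simps ne power2_eq_square)
  apply algebra+
  done
lemma hb_cond:
  "(hb - c0)*cnj(0 - a0) + cnj(hb - c0)*(0 - a0) = 0"
  "(hb - 0)*cnj(a0 - c0) + cnj(hb - 0)*(a0 - c0) = 0"
  "(hb - a0)*cnj(c0 - 0) + cnj(hb - a0)*(c0 - 0) = 0"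
  apply (simp_all add: cnjs)
  apply (simp_all add: defs divide_simps ne power2_eq_square)
  apply algebra+
  done
lemma hc_cond:
  "(hc - a0)*cnj(0 - b0) + cnj(hc - a0)*(0 - b0) = 0"
  "(hc - 0)*cnj(b0 - a0) + cnj(hc - 0)*(b0 - a0) = 0"
  "(hc - b0)*cnj(a0 - 0) + cnj(hc - b0)*(a0 - 0) = 0"
  apply (simp_all add: cnjs)
  apply (simp_all add: defs divide_simps ne power2_eq_square)
  apply algebra+
  done

lemma cross_ha: "Im (cnj (0 - b0) * (c0 - b0)) \<noteq> 0"
proof -
  have "cnj (0 - b0) * (c0 - b0) - cnj (cnj (0 - b0) * (c0 - b0)) = -(e-f)*d/((d+e)*(f+d))"
    apply (simp add: cnjs)
    apply (simp add: defs divide_simps ne power2_eq_square cd ce cf invs)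
    apply algebra
    done
  also have "\<dots> \<noteq> 0" using ne by simp
  finally show ?thesis by (rule Im_nz)
qed
lemma cross_hb: "Im (cnj (0 - c0) * (a0 - c0)) \<noteq> 0"
proof -
  have "cnj (0 - c0) * (a0 - c0) - cnj (cnj (0 - c0) * (a0 - c0)) = -(f-d)*e/((e+f)*(d+e))"
    apply (simp add: cnjs)
    apply (simp add: defs divide_simps ne power2_eq_square cd ce cf invs)
    apply algebra
    done
  also have "\<dots> \<noteq> 0" using ne by simp
  finally show ?thesis by (rule Im_nz)
qed
lemma cross_hc: "Im (cnj (0 - a0) * (b0 - a0)) \<noteq> 0"
proof -
  have "cnj (0 - a0) * (b0 - a0) - cnj (cnj (0 - a0) * (b0 - a0)) = -(d-e)*f/((f+d)*(e+f))"
    apply (simp add: cnjs)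
    apply (simp add: defs divide_simps ne power2_eq_square cd ce cf invs)
    apply algebra
    done
  also have "\<dots> \<noteq> 0" using ne by simp
  finally show ?thesis by (rule Im_nz)
qed

lemma oa_cond:
  "(oa - a0)*cnj(oa - a0) = (oa - hb)*cnj(oa - hb)"
  "(oa - hb)*cnj(oa - hb) = (oa - hc)*cnj(oa - hc)"
  apply (simp_all add: cnjs)
  apply (simp_all add: defs divide_simps ne power2_eq_square)
  apply algebra+
  done
lemma ob_cond:
  "(ob - b0)*cnj(ob - b0) = (ob - hc)*cnj(ob - hc)"
  "(ob - hc)*cnj(ob - hc) = (ob - ha)*cnj(ob - ha)"
  apply (simp_all add: cnjs)
  apply (simp_all add: defs divide_simps ne power2_eq_square)
  apply algebra+
  done
lemma oc_cond:
  "(oc - c0)*cnj(oc - c0) = (oc - ha)*cnj(oc - ha)"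
  "(oc - ha)*cnj(oc - ha) = (oc - hb)*cnj(oc - hb)"
  apply (simp_all add: cnjs)
  apply (simp_all add: defs divide_simps ne power2_eq_square)
  apply algebra+
  done
lemma oz_cond:
  "(oz - oa)*cnj(oz - oa) = (oz - ob)*cnj(oz - ob)"
  "(oz - ob)*cnj(oz - ob) = (oz - oc)*cnj(oz - oc)"
  apply (simp_all add: cnjs)
  apply (simp_all add: defs divide_simps ne power2_eq_square)
  apply algebra+
  done
lemma hz_cond:
  "(hz - oa)*cnj(ob - oc) + cnj(hz - oa)*(ob - oc) = 0"
  "(hz - ob)*cnj(oc - oa) + cnj(hz - ob)*(oc - oa) = 0"
  "(hz - oc)*cnj(oa - ob) + cnj(hz - oc)*(oa - ob) = 0"
  apply (simp_all add: cnjs)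
  apply (simp_all add: defs divide_simps ne power2_eq_square)
  apply algebra+
  done
lemma gz_eq: "(oa + ob + oc)/3 = gz"
  by (simp add: defs divide_simps ne power2_eq_square; algebra)
lemma hz_eq: "hz = oz + 3 * (gz - oz)"
  by (simp add: defs divide_simps ne power2_eq_square; algebra)

end

context tri begin
lemma diff_oc_ob: "oc - ob = d*(e-f)*S2/PP"
  apply (simp add: defs divide_simps ne power2_eq_square)
  apply algebra
  done
lemma cnj_diff_oc_ob: "cnj (oc - ob) = (f-e)*S1/PP"
  apply (simp add: cnj_oc cnj_ob)
  apply (simp add: defs divide_simps ne power2_eq_square)
  apply algebra
  done
lemma S_nz: assumes "ob \<noteq> oc" shows "S1 \<noteq> 0" "S2 \<noteq> 0"
proof -
  show "S2 \<noteq> 0" using assms diff_oc_ob by auto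
  show "S1 \<noteq> 0"
  proof
    assume "S1 = 0"
    then have "cnj (oc - ob) = 0" using cnj_diff_oc_ob by simp
    then show False using assms by simp
  qed
qed
lemma refl_k: assumes "S1 \<noteq> 0" "S2 \<noteq> 0" shows "(oc - ob)/cnj (oc - ob) = -d*S2/S1"
  unfolding cnj_diff_oc_ob unfolding diff_oc_ob using assms ne PP_nz
  by (simp add: field_simps)
lemma ha_nz: "ha \<noteq> 0" unfolding ha_def using ne by simp
lemma gen_t: "d^2*N/((d+e)*(e+f)*(f+d)) = N/(e+f)^2 * (d^2*(e+f)/((d+e)*(d+f)))"
  using ne by (simp add: divide_simps power2_eq_square)
lemma e3f3: "e*3 + f*3 \<noteq> 0"
proof -
  have "e*3 + f*3 = (e+f)*3" by (simp add: algebra_simps)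
  then show ?thesis using sef by (metis mult_eq_0_iff zero_neq_numeral)
qed
lemma gen_t2: "d*N/(3*((d+e)*(e+f)*(f+d))) = N/(3*d*(e+f)^2) * (d^2*(e+f)/((d+e)*(d+f)))"
  using ne e3f3 apply (simp add: divide_simps power2_eq_square)
  apply (simp add: algebra_simps)
  done
lemma st1: "cnj oz - cnj ob = -e*S1/PP"
proof -
  have "cnj oz - cnj ob = (-S2 - (e^2 - f*d))/PP" unfolding cnj_oz cnj_ob by (simp add: diff_divide_distrib)
  also have "-S2 - (e^2 - f*d) = -e*S1" by (simp add: S1_def S2_def power2_eq_square algebra_simps)
  finally show ?thesis .
qed
lemma st2: "cnj gz - cnj ob = S1*(d+f-2*e)/(3*PP)"
proof -
  have "cnj gz - cnj ob = (S1^2 - 3*S2 - 3*(e^2 - f*d))/(3*PP)" unfolding cnj_gz cnj_ob using PP_nz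
    by (simp add: diff_divide_distrib)
  also have "S1^2 - 3*S2 - 3*(e^2 - f*d) = S1*(d+f-2*e)" by (simp add: S1_def S2_def power2_eq_square algebra_simps)
  finally show ?thesis .
qed
lemma st3: "ob + d*e*S2/PP = ro"
proof -
  have "ob + d*e*S2/PP = (f*d*(f*d - e^2) + d*e*S2)/PP" using PP_nz by (simp add: ob_def add_divide_distrib)
  also have "f*d*(f*d - e^2) + d*e*S2 = d^2*(e^2+e*f+f^2)" by (simp add: S2_def power2_eq_square algebra_simps)
  also have "d^2*(e^2+e*f+f^2)/PP = t1 * ha" unfolding t1_def ha_def PP_def by (rule gen_t)
  finally show ?thesis unfolding ro_def .
qed
lemma st4: "ob - d*S2*(d+f-2*e)/(3*PP) = rg"
proof -
  have "ob - d*S2*(d+f-2*e)/(3*PP) = (3*(f*d*(f*d - e^2)) - d*S2*(d+f-2*e))/(3*PP)"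
    using PP_nz by (simp add: ob_def diff_divide_distrib)
  also have "3*(f*d*(f*d - e^2)) - d*S2*(d+f-2*e) = d*(2*f^2*d - f*e^2 - d^2*e + 2*d*e^2 - e*f^2 - f*d^2)"
    by (simp add: S2_def power2_eq_square algebra_simps)
  also have "d*(2*f^2*d - f*e^2 - d^2*e + 2*d*e^2 - e*f^2 - f*d^2)/(3*PP) = t2 * ha"
    unfolding t2_def ha_def PP_def by (rule gen_t2)
  finally show ?thesis unfolding rg_def .
qed
lemma refl_oz: assumes "S1 \<noteq> 0" "S2 \<noteq> 0" shows "reflect ob oc oz = ro"
proof -
  have "reflect ob oc oz = ob + (-d*S2/S1) * (-e*S1/PP)"
  proof -
    have "reflect ob oc oz = ob + ((oc-ob)/cnj(oc-ob)) * (cnj oz - cnj ob)"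
      unfolding reflect_def by simp
    then show ?thesis by (simp only: refl_k[OF assms] st1)
  qed
  also have "\<dots> = ob + d*e*S2/PP" using assms PP_nz by (simp add: field_simps)
  finally show ?thesis using st3 by simp
qed
lemma refl_gz: assumes "S1 \<noteq> 0" "S2 \<noteq> 0" shows "reflect ob oc gz = rg"
proof -
  have "reflect ob oc gz = ob + (-d*S2/S1) * (S1*(d+f-2*e)/(3*PP))"
  proof -
    have "reflect ob oc gz = ob + ((oc-ob)/cnj(oc-ob)) * (cnj gz - cnj ob)"
      unfolding reflect_def by simp
    then show ?thesis by (simp only: refl_k[OF assms] st2)
  qed
  also have "\<dots> = ob - d*S2*(d+f-2*e)/(3*PP)" using assms PP_nz by (simp add: field_simps)
  finally show ?thesis using st4 by simp
qed

end


lemma cross_cyc: "Im (cnj (C - B) * (A - B)) = Im (cnj (B - A) * (C - A))"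
  by (simp add: algebra_simps)

lemma ofre2: "complex_of_real (2 * Im w) = - \<i> * (w - cnj w)"
  by (simp add: complex_eq_iff)

lemma key:
  fixes A B C I :: complex and a b c :: real
  assumes b: "b \<noteq> 0" and s: "a + b + c \<noteq> 0"
    and I: "I = (of_real a * A + of_real b * B + of_real c * C) / of_real (a + b + c)"
  shows "(A - I) * cnj (\<i> * (C - A) / of_real b) + cnj (A - I) * (\<i> * (C - A) / of_real b)
           = of_real (2 * Im (cnj (B - A) * (C - A)) / (a + b + c))"
    and "(C - I) * cnj (\<i> * (C - A) / of_real b) + cnj (C - I) * (\<i> * (C - A) / of_real b)
           = of_real (2 * Im (cnj (B - A) * (C - A)) / (a + b + c))"
proof -
  have s': "complex_of_real (a + b + c) \<noteq> 0" using s of_real_eq_0_iff by blast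
  have b': "complex_of_real b \<noteq> 0" using b by simp
  have D: "complex_of_real (2 * Im (cnj (B - A) * (C - A))) = - \<i> * (cnj (B - A) * (C - A) - cnj (cnj (B - A) * (C - A)))"
    by (rule ofre2)
  have Ic: "cnj I = (of_real a * cnj A + of_real b * cnj B + of_real c * cnj C) / of_real (a + b + c)"
    using I by simp
  show "(A - I) * cnj (\<i> * (C - A) / of_real b) + cnj (A - I) * (\<i> * (C - A) / of_real b)
           = of_real (2 * Im (cnj (B - A) * (C - A)) / (a + b + c))"
    unfolding of_real_divide unfolding D unfolding complex_cnj_diff Ic I using s' b'
    apply (simp add: divide_simps)
    apply (simp add: algebra_simps)
    done
  show "(C - I) * cnj (\<i> * (C - A) / of_real b) + cnj (C - I) * (\<i> * (C - A) / of_real b)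
           = of_real (2 * Im (cnj (B - A) * (C - A)) / (a + b + c))"
    unfolding of_real_divide unfolding D unfolding complex_cnj_diff Ic I using s' b'
    apply (simp add: divide_simps)
    apply (simp add: algebra_simps)
    done
qed

lemma solve2:
  fixes z e f R :: complex
  assumes h1: "z*cnj e + cnj z*e = R" and h2: "z*cnj f + cnj z*f = R"
    and ce: "cnj e = 1/e" and cf: "cnj f = 1/f" and nz: "e \<noteq> 0" "f \<noteq> 0"
    and ef: "e \<noteq> f" and s: "e + f \<noteq> 0"
  shows "z = R*(e*f/(e+f))"
proof -
  have g1: "z + cnj z * e^2 = R * e" using h1 nz unfolding ce by (simp add: field_simps power2_eq_square)
  have g2: "z + cnj z * f^2 = R * f" using h2 nz unfolding cf by (simp add: field_simps power2_eq_square)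
  have "(f - e) * (z * (f + e)) = (f - e) * (R * e * f)" using g1 g2 by algebra
  then have "z * (e + f) = R * e * f" using ef by (simp add: add.commute)
  then show ?thesis using s by (simp add: field_simps)
qed

lemma prop_cross0:
  fixes A B C :: complex and k :: real
  assumes "C - A = of_real k * (B - A)"
  shows "Im (cnj (B - A) * (C - A)) = 0"
proof -
  have "cnj (B - A) * (C - A) = of_real k * ((B - A) * cnj (B - A))"
    unfolding assms by (simp add: algebra_simps)
  also have "\<dots> = of_real (k * (cmod (B - A))^2)"
    by (simp only: complex_norm_square[symmetric] of_real_mult)
  finally show ?thesis by (simp only: Im_complex_of_real)
qed

lemma pair_ne:
  fixes A B C :: complex and b c :: real
  assumes b: "b \<noteq> 0" and c: "c \<noteq> 0" and D: "Im (cnj (B - A) * (C - A)) \<noteq> 0"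
  shows "\<i> * (C - A) / of_real b \<noteq> \<i> * (A - B) / of_real c"
    and "\<i> * (C - A) / of_real b + \<i> * (A - B) / of_real c \<noteq> 0"
proof -
  show "\<i> * (C - A) / of_real b \<noteq> \<i> * (A - B) / of_real c"
  proof
    assume "\<i> * (C - A) / of_real b = \<i> * (A - B) / of_real c"
    then have "\<i> * ((C - A) / of_real b - (A - B) / of_real c) = 0" by (simp add: right_diff_distrib)
    then have "(C - A) / of_real b - (A - B) / of_real c = 0" by simp
    then have "C - A = of_real (- b / c) * (B - A)" using b c by (simp add: field_simps)
    then show False using D prop_cross0 by blast
  qed
  show "\<i> * (C - A) / of_real b + \<i> * (A - B) / of_real c \<noteq> 0"
  proof
    assume "\<i> * (C - A) / of_real b + \<i> * (A - B) / of_real c = 0"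
    then have "\<i> * ((C - A) / of_real b + (A - B) / of_real c) = 0" by (simp add: distrib_left)
    then have "(C - A) / of_real b + (A - B) / of_real c = 0" by simp
    then have "C - A = of_real (b / c) * (B - A)" using b c by (simp add: field_simps)
    then show False using D prop_cross0 by blast
  qed
qed

lemma unit_cnj:
  fixes u :: complex and a :: real
  assumes "a = cmod u" "u \<noteq> 0"
  shows "cnj (\<i> * u / of_real a) = 1 / (\<i> * u / of_real a)" "\<i> * u / of_real a \<noteq> 0"
proof -
  have a: "a \<noteq> 0" using assms by simp
  have "cnj u * u = of_real (a^2)" using assms(1) complex_norm_square by (simp add: mult.commute)
  then show "cnj (\<i> * u / of_real a) = 1 / (\<i> * u / of_real a)" using a assms(2)
    by (simp add: field_simps power2_eq_square)
  show "\<i> * u / of_real a \<noteq> 0" using a assms(2) by simp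
qed

lemma param:
  fixes A B C :: complex
  assumes nc: "\<not> collinear {A,B,C}"
  obtains d e f r where "tri d e f" "r \<noteq> 0"
    "A = incenter A B C + of_real r * (e*f/(e+f))"
    "B = incenter A B C + of_real r * (f*d/(f+d))"
    "C = incenter A B C + of_real r * (d*e/(d+e))"
proof -
  define D where "D = Im (cnj (B - A) * (C - A))"
  have D0: "D \<noteq> 0" using cross_nz_of_noncol[OF nc] D_def by simp
  have D1: "Im (cnj (C - B) * (A - B)) \<noteq> 0" using D0 unfolding D_def by (metis cross_cyc)
  have D2: "Im (cnj (A - C) * (B - C)) \<noteq> 0" using D0 unfolding D_def by (metis cross_cyc)
  have AB: "A \<noteq> B" using D0 D_def by auto
  have CA: "C \<noteq> A" using D0 D_def by auto
  have BC: "B \<noteq> C"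
  proof
    assume "B = C"
    then have "C - A = of_real 1 * (B - A)" by simp
    then show False using prop_cross0 D0 D_def by blast
  qed
  define a where "a = cmod (B - C)"
  define b where "b = cmod (C - A)"
  define c where "c = cmod (A - B)"
  have a0: "a > 0" using BC a_def by simp
  have b0: "b > 0" using CA b_def by simp
  have c0: "c > 0" using AB c_def by simp
  have s0: "a + b + c \<noteq> 0" "b + c + a \<noteq> 0" "c + a + b \<noteq> 0" using a0 b0 c0 by auto
  define I where "I = incenter A B C"
  have I: "I = (of_real a * A + of_real b * B + of_real c * C) / of_real (a + b + c)"
    by (simp add: I_def incenter_def Let_def dist_norm a_def b_def c_def)
  have I2: "I = (of_real b * B + of_real c * C + of_real a * A) / of_real (b + c + a)"
    unfolding I by (simp add: algebra_simps)
  have I3: "I = (of_real c * C + of_real a * A + of_real b * B) / of_real (c + a + b)"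
    unfolding I by (simp add: algebra_simps)
  define d where "d = \<i> * (B - C) / of_real a"
  define e where "e = \<i> * (C - A) / of_real b"
  define f where "f = \<i> * (A - B) / of_real c"
  define r where "r = 2 * D / (a + b + c)"
  have r2: "2 * Im (cnj (C - B) * (A - B)) / (b + c + a) = r"
    unfolding r_def D_def cross_cyc by (simp add: algebra_simps)
  have r3: "2 * Im (cnj (A - C) * (B - C)) / (c + a + b) = r"
    unfolding r_def D_def cross_cyc[of C A B, symmetric] by (simp add: algebra_simps)
  have kA: "(A - I) * cnj e + cnj (A - I) * e = of_real r"
   and kC: "(C - I) * cnj e + cnj (C - I) * e = of_real r"
    using key[OF _ s0(1) I] b0 unfolding e_def r_def D_def by auto
  have kB: "(B - I) * cnj f + cnj (B - I) * f = of_real r"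
   and kA': "(A - I) * cnj f + cnj (A - I) * f = of_real r"
    using key[where A=B and B=C and C=A and a=b and b=c and c=a, OF _ s0(2) I2] c0
    unfolding f_def r2 by auto
  have kC': "(C - I) * cnj d + cnj (C - I) * d = of_real r"
   and kB': "(B - I) * cnj d + cnj (B - I) * d = of_real r"
    using key[where A=C and B=A and C=B and a=c and b=a and c=b, OF _ s0(3) I3] a0
    unfolding d_def r3 by auto
  have ue: "cnj e = 1/e" "e \<noteq> 0" using unit_cnj[of b "C - A"] b_def CA unfolding e_def by auto
  have uf: "cnj f = 1/f" "f \<noteq> 0" using unit_cnj[of c "A - B"] c_def AB unfolding f_def by auto
  have ud: "cnj d = 1/d" "d \<noteq> 0" using unit_cnj[of a "B - C"] a_def BC unfolding d_def by auto
  have pe: "e \<noteq> f" "e + f \<noteq> 0" using pair_ne[of b c B A C] b0 c0 D0 D_def unfolding e_def f_def by auto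
  have pf: "f \<noteq> d" "f + d \<noteq> 0" using pair_ne[where A=B and B=C and C=A and b=c and c=a] c0 a0 D1
    unfolding f_def d_def by auto
  have pd: "d \<noteq> e" "d + e \<noteq> 0" using pair_ne[where A=C and B=A and C=B and b=a and c=b] a0 b0 D2
    unfolding d_def e_def by auto
  have "tri d e f"
    by unfold_locales (use ue uf ud pe pf pd in auto)
  moreover have "r \<noteq> 0" unfolding r_def using D0 s0 by simp
  moreover have "A - I = of_real r * (e*f/(e+f))"
    using solve2[OF kA kA' ue(1) uf(1) ue(2) uf(2) pe] .
  moreover have "B - I = of_real r * (f*d/(f+d))"
    using solve2[OF kB kB' uf(1) ud(1) uf(2) ud(2) pf] .
  moreover have "C - I = of_real r * (d*e/(d+e))"
    using solve2[OF kC' kC ud(1) ue(1) ud(2) ue(2) pd] .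
  ultimately show ?thesis using that unfolding I_def by (metis add.commute diff_add_cancel)
qed



lemma line_param: "affine hull {x, y} = range (\<lambda>t. x + of_real t * (y - x))"
  for x y :: complex
proof -
  have "affine hull {x, y} = {u *\<^sub>R x + v *\<^sub>R y |u v. u + v = 1}" by (rule affine_hull_2)
  also have "\<dots> = range (\<lambda>t. x + of_real t * (y - x))"
  proof (intro set_eqI iffI)
    fix z assume "z \<in> {u *\<^sub>R x + v *\<^sub>R y |u v. u + v = 1}"
    then obtain u v where zu: "z = u *\<^sub>R x + v *\<^sub>R y" and uv: "u + v = 1" by blast
    then have "u = 1 - v" by simp
    then have "z = (1 - v) *\<^sub>R x + v *\<^sub>R y" using zu by simp
    then have "z = x + of_real v * (y - x)"
      by (simp add: scaleR_conv_of_real algebra_simps)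
    then show "z \<in> range (\<lambda>t. x + of_real t * (y - x))" by blast
  next
    fix z assume "z \<in> range (\<lambda>t. x + of_real t * (y - x))"
    then obtain t where "z = x + of_real t * (y - x)" by blast
    then have "z = (1 - t) *\<^sub>R x + t *\<^sub>R y" by (simp add: scaleR_conv_of_real algebra_simps)
    then show "z \<in> {u *\<^sub>R x + v *\<^sub>R y |u v. u + v = 1}" by force
  qed
  finally show ?thesis .
qed

lemma in_line:
  fixes w z p q :: complex
  assumes "cnj w = w" "z = p + w * (q - p)"
  shows "z \<in> affine hull {p, q}"
proof -
  have "w = of_real (Re w)" using assms(1) by (metis Reals_cnj_iff complex_is_Real_iff of_real_Re)
  then have "z = p + of_real (Re w) * (q - p)" using assms(2) by simp
  then show ?thesis unfolding line_param by blast
qed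

lemma two_pts:
  fixes p q x y :: complex
  assumes pq: "p \<noteq> q" and p: "p \<in> affine hull {x, y}" and q: "q \<in> affine hull {x, y}"
  shows "affine hull {p, q} = affine hull {x, y}"
proof
  show "affine hull {p, q} \<subseteq> affine hull {x, y}"
    by (rule hull_minimal) (use p q in \<open>auto simp: affine_affine_hull\<close>)
next
  obtain \<alpha> where a: "p = x + of_real \<alpha> * (y - x)" using p unfolding line_param by blast
  obtain \<beta> where b: "q = x + of_real \<beta> * (y - x)" using q unfolding line_param by blast
  have ab: "\<alpha> \<noteq> \<beta>" using a b pq by auto
  have xy: "y - x \<noteq> 0" using a b pq by auto
  have "x = p + of_real (- \<alpha> / (\<beta> - \<alpha>)) * (q - p)"
    unfolding a b using ab by (simp add: field_simps)
  then have xin: "x \<in> affine hull {p, q}" unfolding line_param by blast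
  have "y = p + of_real ((1 - \<alpha>) / (\<beta> - \<alpha>)) * (q - p)"
    unfolding a b using ab by (simp add: field_simps)
  then have yin: "y \<in> affine hull {p, q}" unfolding line_param by blast
  show "affine hull {x, y} \<subseteq> affine hull {p, q}"
    by (rule hull_minimal) (use xin yin in \<open>auto simp: affine_affine_hull\<close>)
qed

lemma refl_aux: "P + k * cnj (U + of_real t * (V - U) - P)
   = P + k * cnj (U - P) + of_real t * (P + k * cnj (V - P) - (P + k * cnj (U - P)))"
  by (simp add: algebra_simps)

lemma refl_image:
  "reflect P Q ` range (\<lambda>t. U + of_real t * (V - U))
   = range (\<lambda>t. reflect P Q U + of_real t * (reflect P Q V - reflect P Q U))"
proof -
  have "\<And>t. reflect P Q (U + of_real t * (V - U)) = reflect P Q U + of_real t * (reflect P Q V - reflect P Q U)"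
    unfolding reflect_def by (rule refl_aux)
  then show ?thesis by (simp add: image_image)
qed

lemma reflect_inj:
  assumes "P \<noteq> Q" "reflect P Q X = reflect P Q Y"
  shows "X = Y"
proof -
  have "cnj (Q - P) \<noteq> 0" using assms(1) by simp
  then have k: "(Q - P) / cnj (Q - P) \<noteq> 0" using assms(1) by simp
  have "(Q - P) / cnj (Q - P) * cnj (X - P) = (Q - P) / cnj (Q - P) * cnj (Y - P)"
    using assms(2) unfolding reflect_def by (rule add_left_imp_eq)
  then have "cnj (X - P) = cnj (Y - P)" using k by (rule mult_left_cancel[THEN iffD1, rotated])
  then show ?thesis by simp
qed

lemma circ_cyc: "circumcenter B C A = circumcenter A B C"
proof -
  have "(\<lambda>X. dist X B = dist X C \<and> dist X C = dist X A) = (\<lambda>X. dist X A = dist X B \<and> dist X B = dist X C)"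
    by (rule ext) argo
  then show ?thesis unfolding circumcenter_def by simp
qed

lemma orth_cyc: "orthocenter B C A = orthocenter A B C"
proof -
  have "(\<lambda>H. inner (H - B) (C - A) = 0 \<and> inner (H - C) (A - B) = 0 \<and> inner (H - A) (B - C) = 0)
      = (\<lambda>H. inner (H - A) (B - C) = 0 \<and> inner (H - B) (C - A) = 0 \<and> inner (H - C) (A - B) = 0)"
    by (rule ext) blast
  then show ?thesis unfolding orthocenter_def by simp
qed

lemma centroid_cyc: "centroid B C A = centroid A B C"
  unfolding centroid_def by (simp add: algebra_simps)

lemma incenter_cyc: "incenter B C A = incenter A B C"
  unfolding incenter_def Let_def by (simp add: add_ac)

lemma euler_cyc: "euler_line B C A = euler_line A B C"
  unfolding euler_line_def circ_cyc[of B C A] orth_cyc[of B C A] centroid_cyc[of B C A] ..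



lemma side:
  fixes A B C I HA HB HC OA OB OC :: complex
  assumes nondeg: "\<not> collinear {A, B, C}"
    and I: "I = incenter A B C"
    and HA: "HA = orthocenter B I C" and HB: "HB = orthocenter C I A" and HC: "HC = orthocenter A I B"
    and ndA: "\<not> collinear {A, HB, HC}" and ndB: "\<not> collinear {B, HC, HA}"
    and ndC: "\<not> collinear {C, HA, HB}"
    and OA: "OA = circumcenter A HB HC" and OB: "OB = circumcenter B HC HA"
    and OC: "OC = circumcenter C HA HB"
    and ndO: "\<not> collinear {OA, OB, OC}"
    and eu: "circumcenter OA OB OC \<noteq> centroid OA OB OC"
  shows "reflect OB OC ` euler_line OA OB OC = line HA I"
proof -
  obtain d e f r where tr: "tri d e f" and r: "r \<noteq> 0"
    and Aq: "A = incenter A B C + of_real r * (e*f/(e+f))"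
    and Bq: "B = incenter A B C + of_real r * (f*d/(f+d))"
    and Cq: "C = incenter A B C + of_real r * (d*e/(d+e))"
    using param[OF nondeg] by blast
  interpret tri d e f by (rule tr)
  have A': "A = I + of_real r * a0" using Aq I a0_def by simp
  have B': "B = I + of_real r * b0" using Bq I b0_def by simp
  have C': "C = I + of_real r * c0" using Cq I c0_def by simp
  have HA': "HA = I + of_real r * ha"
  proof -
    have "orthocenter (I + of_real r * b0) (I + of_real r * 0) (I + of_real r * c0) = I + of_real r * ha"
      by (rule orth_scaled[OF r cross_ha ha_cond])
    then show ?thesis using HA B' C' by simp
  qed
  have HB': "HB = I + of_real r * hb"
  proof -
    have "orthocenter (I + of_real r * c0) (I + of_real r * 0) (I + of_real r * a0) = I + of_real r * hb"
      by (rule orth_scaled[OF r cross_hb hb_cond])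
    then show ?thesis using HB C' A' by simp
  qed
  have HC': "HC = I + of_real r * hc"
  proof -
    have "orthocenter (I + of_real r * a0) (I + of_real r * 0) (I + of_real r * b0) = I + of_real r * hc"
      by (rule orth_scaled[OF r cross_hc hc_cond])
    then show ?thesis using HC A' B' by simp
  qed
  have OA': "OA = I + of_real r * oa"
  proof -
    have "Im (cnj (HB - A) * (HC - A)) \<noteq> 0" by (rule cross_nz_of_noncol[OF ndA])
    then have nc: "Im (cnj (hb - a0) * (hc - a0)) \<noteq> 0" unfolding HB' HC' A' cross_scaled by simp
    show ?thesis unfolding OA A' HB' HC' by (rule circ_scaled[OF r nc oa_cond])
  qed
  have OB': "OB = I + of_real r * ob"
  proof -
    have "Im (cnj (HC - B) * (HA - B)) \<noteq> 0" by (rule cross_nz_of_noncol[OF ndB])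
    then have nc: "Im (cnj (hc - b0) * (ha - b0)) \<noteq> 0" unfolding HC' HA' B' cross_scaled by simp
    show ?thesis unfolding OB B' HC' HA' by (rule circ_scaled[OF r nc ob_cond])
  qed
  have OC': "OC = I + of_real r * oc"
  proof -
    have "Im (cnj (HA - C) * (HB - C)) \<noteq> 0" by (rule cross_nz_of_noncol[OF ndC])
    then have nc: "Im (cnj (ha - c0) * (hb - c0)) \<noteq> 0" unfolding HA' HB' C' cross_scaled by simp
    show ?thesis unfolding OC C' HA' HB' by (rule circ_scaled[OF r nc oc_cond])
  qed
  have "Im (cnj (OB - OA) * (OC - OA)) \<noteq> 0" by (rule cross_nz_of_noncol[OF ndO])
  then have ncO: "Im (cnj (ob - oa) * (oc - oa)) \<noteq> 0" unfolding OA' OB' OC' cross_scaled by simp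
  have Oz: "circumcenter OA OB OC = I + of_real r * oz"
    unfolding OA' OB' OC' by (rule circ_scaled[OF r ncO oz_cond])
  have Gz: "centroid OA OB OC = I + of_real r * gz"
    unfolding OA' OB' OC' centroid_scaled gz_eq ..
  have Hz: "orthocenter OA OB OC = I + of_real r * hz"
    unfolding OA' OB' OC' by (rule orth_scaled[OF r ncO hz_cond])
  have obc: "ob \<noteq> oc"
  proof
    assume "ob = oc"
    then have "oc - oa = of_real 1 * (ob - oa)" by simp
    then show False using prop_cross0 ncO by blast
  qed
  note S = S_nz[OF obc]
  have OBC: "OB \<noteq> OC" using obc r unfolding OB' OC' by simp
  have ozg: "I + of_real r * oz \<noteq> I + of_real r * gz" using eu Oz Gz by simp
  have RO: "reflect OB OC (I + of_real r * oz) = I + of_real r * ro"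
    unfolding OB' OC' reflect_scaled[OF r] refl_oz[OF S] ..
  have RG: "reflect OB OC (I + of_real r * gz) = I + of_real r * rg"
    unfolding OB' OC' reflect_scaled[OF r] refl_gz[OF S] ..
  have mO: "I + of_real r * ro \<in> affine hull {HA, I}"
  proof (rule in_line[where w = "1 - t1"])
    show "cnj (1 - t1) = 1 - t1" by (simp add: cnj_t1)
    show "I + of_real r * ro = HA + (1 - t1) * (I - HA)" unfolding HA' ro_def by (simp add: algebra_simps)
  qed
  have mG: "I + of_real r * rg \<in> affine hull {HA, I}"
  proof (rule in_line[where w = "1 - t2"])
    show "cnj (1 - t2) = 1 - t2" by (simp add: cnj_t2)
    show "I + of_real r * rg = HA + (1 - t2) * (I - HA)" unfolding HA' rg_def by (simp add: algebra_simps)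
  qed
  have hin: "I + of_real r * hz \<in> affine hull {I + of_real r * oz, I + of_real r * gz}"
  proof (rule in_line[where w = 3])
    show "cnj 3 = (3::complex)" by simp
    show "I + of_real r * hz = I + of_real r * oz + 3 * (I + of_real r * gz - (I + of_real r * oz))"
      unfolding hz_eq by (simp add: algebra_simps)
  qed
  have EL: "euler_line OA OB OC = affine hull {I + of_real r * oz, I + of_real r * gz}"
  proof -
    have "{I + of_real r * oz, I + of_real r * gz, I + of_real r * hz}
        = insert (I + of_real r * hz) {I + of_real r * oz, I + of_real r * gz}" by auto
    then show ?thesis unfolding euler_line_def Oz Gz Hz using hull_redundant[OF hin] by simp
  qed
  have "reflect OB OC ` euler_line OA OB OC
      = affine hull {reflect OB OC (I + of_real r * oz), reflect OB OC (I + of_real r * gz)}"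
    unfolding EL line_param refl_image ..
  also have "\<dots> = affine hull {I + of_real r * ro, I + of_real r * rg}" unfolding RO RG ..
  also have "\<dots> = affine hull {HA, I}"
  proof (rule two_pts[OF _ mO mG])
    show "I + of_real r * ro \<noteq> I + of_real r * rg"
      using reflect_inj[OF OBC] ozg RO RG by metis
  qed
  finally show ?thesis unfolding line_def .
qed


theorem proposition5p7:
  fixes A B C :: complex
  assumes nondeg: "\<not> collinear {A, B, C}"
  defines "I \<equiv> incenter A B C"
  defines "HA \<equiv> orthocenter B I C" and "HB \<equiv> orthocenter C I A" and "HC \<equiv> orthocenter A I B"
  assumes ndA: "\<not> collinear {A, HB, HC}" and ndB: "\<not> collinear {B, HC, HA}"
      and ndC: "\<not> collinear {C, HA, HB}"
  defines "OA \<equiv> circumcenter A HB HC" and "OB \<equiv> circumcenter B HC HA"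
      and "OC \<equiv> circumcenter C HA HB"
  assumes ndO: "\<not> collinear {OA, OB, OC}"
      and euler_def: "circumcenter OA OB OC \<noteq> centroid OA OB OC"
  shows "reflect OB OC ` euler_line OA OB OC = line HA I
       \<and> reflect OC OA ` euler_line OA OB OC = line HB I
       \<and> reflect OA OB ` euler_line OA OB OC = line HC I"
proof (intro conjI)
  have I1: "I = incenter A B C" using I_def by simp
  have I2: "I = incenter B C A" using I_def incenter_cyc[of B C A] by simp
  have I3: "I = incenter C A B" using I_def incenter_cyc[of B C A] incenter_cyc[of C A B] by simp
  have HA': "HA = orthocenter B I C" and HB': "HB = orthocenter C I A" and HC': "HC = orthocenter A I B"
    using HA_def HB_def HC_def by simp_all
  have OA': "OA = circumcenter A HB HC" and OB': "OB = circumcenter B HC HA" and OC': "OC = circumcenter C HA HB"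
    using OA_def OB_def OC_def by simp_all
  have s1: "{B, C, A} = {A, B, C}" "{C, A, B} = {A, B, C}" by auto
  have s2: "{OB, OC, OA} = {OA, OB, OC}" "{OC, OA, OB} = {OA, OB, OC}" by auto
  have nd2: "\<not> collinear {B, C, A}" "\<not> collinear {C, A, B}" using nondeg s1 by simp_all
  have ndO2: "\<not> collinear {OB, OC, OA}" "\<not> collinear {OC, OA, OB}" using ndO s2 by simp_all
  have cc: "circumcenter OB OC OA = circumcenter OA OB OC" "circumcenter OC OA OB = circumcenter OA OB OC"
    using circ_cyc[of OB OC OA] circ_cyc[of OC OA OB] by simp_all
  have gc: "centroid OB OC OA = centroid OA OB OC" "centroid OC OA OB = centroid OA OB OC"
    using centroid_cyc[of OB OC OA] centroid_cyc[of OC OA OB] by simp_all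
  have ec: "euler_line OB OC OA = euler_line OA OB OC" "euler_line OC OA OB = euler_line OA OB OC"
    using euler_cyc[of OB OC OA] euler_cyc[of OC OA OB] by simp_all
  have eu2: "circumcenter OB OC OA \<noteq> centroid OB OC OA" "circumcenter OC OA OB \<noteq> centroid OC OA OB"
    using euler_def cc gc by simp_all
  show "reflect OB OC ` euler_line OA OB OC = line HA I"
    by (rule side[OF nondeg I1 HA' HB' HC' ndA ndB ndC OA' OB' OC' ndO euler_def])
  show "reflect OC OA ` euler_line OA OB OC = line HB I"
    using side[OF nd2(1) I2 HB' HC' HA' ndB ndC ndA OB' OC' OA' ndO2(1) eu2(1)] ec by simp
  show "reflect OA OB ` euler_line OA OB OC = line HC I"
    using side[OF nd2(2) I3 HC' HA' HB' ndC ndA ndB OC' OA' OB' ndO2(2) eu2(2)] ec by simp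
qed

end
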